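(* Let $H$ be a finite connected graph (loops allowed) with at least one edge. Then $\hom(\mathbb{T}^r,H)$ has long range action for no positive integer $r$ if and only if $H$ is dismantlable.
   Context: $N(i)$ is the set of nodes adjacent to $i$ (containing $i$ iff $i$ is looped). If $i\neq j$ are nodes with $N(i)\subseteq N(j)$, the map sending $i$ to $j$ and fixing other nodes is a fold of $H$ onto $H\setminus\{i\}$; $H$ is dismantlable if some sequence of folds reduces it to a single node. $\mathbb{T}^r$ is the infinite connected cycle-free graph with all degrees $r+1$, with a fixed root site $x$; $\hom(\mathbb{T}^r,H)$ is the set of graph homomorphisms $\mathbb{T}^r\to H$. $\hom(\mathbb{T}^r,H)$ has long range action if there exist $\varphi\in\hom(\mathbb{T}^r,H)$ and a node $i$ of $H$ such that for every $n\ge1$, no $\psi\in\hom(\mathbb{T}^r,H)$ which agrees with $\varphi$ on all sites at distance $n$ from $x$ satisfies $\psi(x)=i$. *)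

theory Defs
  imports Main
begin

definition graph :: "'a set \<Rightarrow> ('a \<Rightarrow> 'a \<Rightarrow> bool) \<Rightarrow> bool" where
  "graph V E \<longleftrightarrow> (\<forall>i j. E i j \<longrightarrow> i \<in> V \<and> j \<in> V \<and> E j i)"

inductive walk :: "'a set \<Rightarrow> ('a \<Rightarrow> 'a \<Rightarrow> bool) \<Rightarrow> 'a \<Rightarrow> 'a \<Rightarrow> bool"
  for V E where
  walk_refl: "i \<in> V \<Longrightarrow> walk V E i i"
| walk_step: "walk V E i j \<Longrightarrow> E j k \<Longrightarrow> k \<in> V \<Longrightarrow> walk V E i k"

definition connected_graph :: "'a set \<Rightarrow> ('a \<Rightarrow> 'a \<Rightarrow> bool) \<Rightarrow> bool" where
  "connected_graph V E \<longleftrightarrow> V \<noteq> {} \<and> (\<forall>i\<in>V. \<forall>j\<in>V. walk V E i j)"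

definition nbhd :: "'a set \<Rightarrow> ('a \<Rightarrow> 'a \<Rightarrow> bool) \<Rightarrow> 'a \<Rightarrow> 'a set" where
  "nbhd V E i = {j \<in> V. E i j}"

text \<open>Dismantlability: a sequence of folds (each removing a node i dominated by some
  other node j, N(i) \<subseteq> N(j) in the current induced subgraph) reaching a single node.\<close>
inductive dismantlable :: "('a \<Rightarrow> 'a \<Rightarrow> bool) \<Rightarrow> 'a set \<Rightarrow> bool" for E where
  dism_single: "dismantlable E {v}"
| dism_fold: "\<lbrakk> i \<in> V; j \<in> V; i \<noteq> j; nbhd V E i \<subseteq> nbhd V E j;
               dismantlable E (V - {i}) \<rbrakk> \<Longrightarrow> dismantlable E V"

text \<open>Sites of T^r are finite words: the root is [], the root has r+1 children
  [a] with a \<le> r, and every other site xs has r children xs@[a] with a < r. This is the infinite connected cycle-free graph with all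
  degrees r+1; the root site x is []. The distance of a site from the root is its length.\<close>

definition tsite :: "nat \<Rightarrow> nat list \<Rightarrow> bool" where
  "tsite r xs \<longleftrightarrow> (xs = [] \<or> (hd xs \<le> r \<and> (\<forall>a\<in>set (tl xs). a < r)))"

definition tedge :: "nat \<Rightarrow> nat list \<Rightarrow> nat list \<Rightarrow> bool" where
  "tedge r u v \<longleftrightarrow> tsite r u \<and> tsite r v \<and> ((\<exists>a. v = u @ [a]) \<or> (\<exists>a. u = v @ [a]))"

text \<open>Graph homomorphisms T^r \<rightarrow> H (values off the sites are irrelevant).\<close>
definition is_hom :: "nat \<Rightarrow> 'a set \<Rightarrow> ('a \<Rightarrow> 'a \<Rightarrow> bool) \<Rightarrow> (nat list \<Rightarrow> 'a) \<Rightarrow> bool" where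
  "is_hom r V E \<phi> \<longleftrightarrow> (\<forall>u. tsite r u \<longrightarrow> \<phi> u \<in> V) \<and> (\<forall>u v. tedge r u v \<longrightarrow> E (\<phi> u) (\<phi> v))"

definition long_range_action :: "nat \<Rightarrow> 'a set \<Rightarrow> ('a \<Rightarrow> 'a \<Rightarrow> bool) \<Rightarrow> bool" where
  "long_range_action r V E \<longleftrightarrow>
     (\<exists>\<phi> i. is_hom r V E \<phi> \<and> i \<in> V \<and>
        (\<forall>n\<ge>1. \<not> (\<exists>\<psi>. is_hom r V E \<psi> \<and>
                       (\<forall>u. tsite r u \<and> length u = n \<longrightarrow> \<psi> u = \<phi> u) \<and> \<psi> [] = i)))"

end

theory Submission imports Defs begin

definition stepc :: "'a set \<Rightarrow> ('a \<Rightarrow> 'a \<Rightarrow> bool) \<Rightarrow> ('a \<Rightarrow> 'a) \<Rightarrow> ('a \<Rightarrow> 'a) \<Rightarrow> bool" where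
  "stepc V E g h \<longleftrightarrow> (\<forall>x\<in>V. \<forall>y\<in>V. E x y \<longrightarrow> E (g x) (h y))"

definition seqc :: "'a set \<Rightarrow> ('a \<Rightarrow> 'a \<Rightarrow> bool) \<Rightarrow> ('a \<Rightarrow> 'a) \<Rightarrow> ('a \<Rightarrow> 'a) \<Rightarrow> nat \<Rightarrow> (nat \<Rightarrow> 'a \<Rightarrow> 'a) \<Rightarrow> bool" where
  "seqc V E g h n G \<longleftrightarrow> (\<forall>x\<in>V. G 0 x = g x) \<and> (\<forall>x\<in>V. G n x = h x)
     \<and> (\<forall>k<n. stepc V E (G k) (G (Suc k))) \<and> (\<forall>k. \<forall>x\<in>V. G k x \<in> V)"

lemma stepc_cong: "(\<And>x. x \<in> V \<Longrightarrow> g x = g' x) \<Longrightarrow> stepc V E g h \<Longrightarrow> stepc V E g' h"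
  unfolding stepc_def by auto

lemma seqc_concat:
  assumes "seqc V E g h n1 G1" "seqc V E h l n2 G2"
  shows "seqc V E g l (n1+n2) (\<lambda>k. if k \<le> n1 then G1 k else G2 (k - n1))"
proof -
  have steps: "stepc V E (if k \<le> n1 then G1 k else G2 (k - n1)) (if Suc k \<le> n1 then G1 (Suc k) else G2 (Suc k - n1))"
    if "k < n1 + n2" for k
  proof (cases "Suc k \<le> n1")
    case True then show ?thesis using assms that unfolding seqc_def by auto
  next
    case False
    show ?thesis
    proof (cases "k = n1")
      case True
      have "stepc V E (G2 0) (G2 (Suc 0))" using assms that True unfolding seqc_def by auto
      then have "stepc V E (G1 n1) (G2 (Suc 0))"
        by (rule stepc_cong[rotated]) (use assms in \<open>auto simp: seqc_def\<close>)
      then show ?thesis using True by simp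
    next
      case False
      then have "k > n1" using \<open>\<not> Suc k \<le> n1\<close> by simp
      then have "Suc k - n1 = Suc (k - n1)" "k - n1 < n2" using that by auto
      then show ?thesis using assms \<open>k > n1\<close> unfolding seqc_def by auto
    qed
  qed
  show ?thesis
    unfolding seqc_def
  proof (intro conjI)
    show "\<forall>x\<in>V. (if n1 + n2 \<le> n1 then G1 (n1 + n2) else G2 (n1 + n2 - n1)) x = l x"
    proof (cases "n2 = 0")
      case True then show ?thesis using assms unfolding seqc_def by auto
    next
      case False then show ?thesis using assms unfolding seqc_def by auto
    qed
  qed (use assms steps in \<open>auto simp: seqc_def\<close>)
qed

lemma walk_in: "walk V E i j \<Longrightarrow> i \<in> V \<and> j \<in> V"
  by (induction rule: walk.induct) auto

lemma walk_seqc: "walk V E i j \<Longrightarrow> \<exists>n G. seqc V E (\<lambda>_. i) (\<lambda>_. j) n G"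
proof (induction rule: walk.induct)
  case (walk_refl i)
  then show ?case by (intro exI[of _ 0] exI[of _ "\<lambda>_ _. i"]) (auto simp: seqc_def)
next
  case (walk_step i j k)
  then obtain n G where G: "seqc V E (\<lambda>_. i) (\<lambda>_. j) n G" by blast
  have "j \<in> V" using walk_in[OF walk_step(1)] by simp
  have "seqc V E (\<lambda>_. j) (\<lambda>_. k) 1 (\<lambda>t _. if t = 0 then j else k)"
    using walk_step \<open>j \<in> V\<close> by (auto simp: seqc_def stepc_def)
  from seqc_concat[OF G this] show ?case by blast
qed

definition foldm :: "'a \<Rightarrow> 'a \<Rightarrow> 'a \<Rightarrow> 'a" where
  "foldm a b x = (if x = a then b else x)"

lemma foldm_hom:
  assumes sym: "\<forall>x y. E x y \<longrightarrow> E y x" and "a \<in> V" "b \<in> V" "nbhd V E a \<subseteq> nbhd V E b"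
    and "x \<in> V" "y \<in> V" "E x y"
  shows "E (foldm a b x) (foldm a b y)"
proof -
  have N: "\<And>z. z \<in> V \<Longrightarrow> E a z \<Longrightarrow> E b z" using assms(4) unfolding nbhd_def by auto
  show ?thesis
  proof (cases "x = a")
    case True
    show ?thesis
    proof (cases "y = a")
      case True
      have "E b a" using N assms \<open>x = a\<close> True by auto
      then have "E a b" using sym by auto
      then have "E b b" using N assms by auto
      then show ?thesis using \<open>x = a\<close> True by (simp add: foldm_def)
    next
      case False
      then show ?thesis using N assms \<open>x = a\<close> by (simp add: foldm_def)
    qed
  next
    case False
    show ?thesis
    proof (cases "y = a")
      case True
      have "E a x" using sym assms True by auto
      then have "E b x" using N assms by auto
      then show ?thesis using sym False True by (simp add: foldm_def)
    next
      case False
      then show ?thesis using \<open>x \<noteq> a\<close> assms by (simp add: foldm_def)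
    qed
  qed
qed

lemma foldm_step:
  assumes "a \<in> V" "b \<in> V" "nbhd V E a \<subseteq> nbhd V E b"
  shows "stepc V E (foldm a b) id"
  using assms unfolding stepc_def nbhd_def foldm_def by auto

lemma dism_seqc:
  assumes "dismantlable E V" and sym: "\<forall>x y. E x y \<longrightarrow> E y x"
  shows "\<exists>v\<in>V. \<exists>n G. seqc V E (\<lambda>_. v) id n G"
  using assms(1)
proof (induction rule: dismantlable.induct)
  case (dism_single v)
  then show ?case by (intro bexI[of _ v] exI[of _ 0] exI[of _ "\<lambda>_ _. v"]) (auto simp: seqc_def)
next
  case (dism_fold a V b)
  then obtain v n G where v: "v \<in> V - {a}" and G: "seqc (V - {a}) E (\<lambda>_. v) id n G" by blast
  let ?f = "foldm a b"
  have fin: "x \<in> V \<Longrightarrow> ?f x \<in> V - {a}" for x using dism_fold by (auto simp: foldm_def)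
  have fh: "x \<in> V \<Longrightarrow> y \<in> V \<Longrightarrow> E x y \<Longrightarrow> E (?f x) (?f y)" for x y
    using foldm_hom[OF sym dism_fold(1,2,4)] by blast
  have S1: "seqc V E (\<lambda>_. v) ?f n (\<lambda>k x. G k (?f x))"
    unfolding seqc_def
  proof (intro conjI)
    show "\<forall>k<n. stepc V E (\<lambda>x. G k (?f x)) (\<lambda>x. G (Suc k) (?f x))"
      using G fin fh unfolding seqc_def stepc_def by metis
  qed (use G fin v in \<open>auto simp: seqc_def\<close>)
  have S2: "seqc V E ?f id 1 (\<lambda>t. if t = 0 then ?f else id)"
    using foldm_step[OF dism_fold(1,2,4)] fin by (auto simp: seqc_def)
  from seqc_concat[OF S1 S2] v show ?case by blast
qed


lemma tsite_snoc: "tsite r u \<Longrightarrow> a < r \<Longrightarrow> tsite r (u @ [a])"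
  unfolding tsite_def by (cases u) auto

lemma tsite_butlast: "tsite r (u @ [a]) \<Longrightarrow> tsite r u"
  unfolding tsite_def by (cases u) auto

lemma tsite_Nil: "tsite r []" unfolding tsite_def by simp

lemma hom_edge_snoc:
  assumes "is_hom r V E \<phi>" "tsite r (u @ [a])"
  shows "E (\<phi> u) (\<phi> (u @ [a]))" "\<phi> u \<in> V" "\<phi> (u @ [a]) \<in> V"
  using assms tsite_butlast[OF assms(2)] unfolding is_hom_def tedge_def by auto

lemma seqc_hom:
  assumes S: "seqc V E (\<lambda>_. i) id N G" and hom: "is_hom r V E \<phi>" and sym: "\<forall>x y. E x y \<longrightarrow> E y x"
  shows "is_hom r V E (\<lambda>u. if length u < N then G (length u) (\<phi> u) else \<phi> u)" (is "is_hom r V E ?\<psi>")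
proof -
  have dir: "E (?\<psi> u) (?\<psi> (u @ [a]))" if "tsite r (u @ [a])" for u a
  proof -
    note h = hom_edge_snoc[OF hom that]
    consider "Suc (length u) < N" | "Suc (length u) = N" | "length u \<ge> N" by linarith
    then show ?thesis
    proof cases
      case 1
      then have "stepc V E (G (length u)) (G (Suc (length u)))" using S unfolding seqc_def by auto
      then show ?thesis using 1 h unfolding stepc_def by auto
    next
      case 2
      then have "stepc V E (G (length u)) (G (Suc (length u)))" using S unfolding seqc_def by auto
      moreover have "G N (\<phi> (u @ [a])) = \<phi> (u @ [a])" using S h unfolding seqc_def by auto
      ultimately show ?thesis using 2 h unfolding stepc_def by force
    next
      case 3
      then show ?thesis using h by auto
    qed
  qed
  show ?thesis
    unfolding is_hom_def
  proof (intro conjI allI impI)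
    fix u assume "tsite r u"
    then show "?\<psi> u \<in> V" using S hom unfolding seqc_def is_hom_def by auto
  next
    fix u v assume "tedge r u v"
    then have "tsite r u" "tsite r v" and c: "(\<exists>a. v = u @ [a]) \<or> (\<exists>a. u = v @ [a])"
      unfolding tedge_def by auto
    from c show "E (?\<psi> u) (?\<psi> v)"
    proof
      assume "\<exists>a. v = u @ [a]" then obtain a where "v = u @ [a]" by blast
      then show ?thesis using dir \<open>tsite r v\<close> by blast
    next
      assume "\<exists>a. u = v @ [a]" then obtain a where "u = v @ [a]" by blast
      then show ?thesis using dir \<open>tsite r u\<close> sym by blast
    qed
  qed
qed

lemma dism_no_lra:
  assumes "graph V E" "connected_graph V E" "dismantlable E V"
  shows "\<not> long_range_action r V E"
proof
  have sym: "\<forall>x y. E x y \<longrightarrow> E y x" using assms(1) unfolding graph_def by blast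
  assume "long_range_action r V E"
  then obtain \<phi> i where hom: "is_hom r V E \<phi>" and i: "i \<in> V" and
    no: "\<forall>n\<ge>1. \<not> (\<exists>\<psi>. is_hom r V E \<psi> \<and> (\<forall>u. tsite r u \<and> length u = n \<longrightarrow> \<psi> u = \<phi> u) \<and> \<psi> [] = i)"
    unfolding long_range_action_def by blast
  obtain v n2 G2 where v: "v \<in> V" and G2: "seqc V E (\<lambda>_. v) id n2 G2"
    using dism_seqc[OF assms(3) sym] by blast
  have W: "walk V E i v" using assms(2) i v unfolding connected_graph_def by blast
  obtain n1 G1 where G1: "seqc V E (\<lambda>_. i) (\<lambda>_. v) n1 G1" using walk_seqc[OF W] by blast
  obtain N G where S: "seqc V E (\<lambda>_. i) id N G" using seqc_concat[OF G1 G2] by blast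
  let ?\<psi> = "\<lambda>u. if length u < N then G (length u) (\<phi> u) else \<phi> u"
  have "is_hom r V E ?\<psi>" by (rule seqc_hom[OF S hom sym])
  moreover have "?\<psi> [] = i"
  proof (cases "N = 0")
    case True
    have "\<phi> [] \<in> V" using hom tsite_Nil unfolding is_hom_def by blast
    then have "G 0 (\<phi> []) = i" "G N (\<phi> []) = \<phi> []" using S unfolding seqc_def by auto
    then show ?thesis using True by simp
  next
    case False
    have "\<phi> [] \<in> V" using hom tsite_Nil unfolding is_hom_def by blast
    then show ?thesis using False S unfolding seqc_def by auto
  qed
  moreover have "\<forall>u. tsite r u \<and> length u = Suc N \<longrightarrow> ?\<psi> u = \<phi> u" by auto
  ultimately have "is_hom r V E ?\<psi> \<and> (\<forall>u. tsite r u \<and> length u = Suc N \<longrightarrow> ?\<psi> u = \<phi> u) \<and> ?\<psi> [] = i"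
    by blast
  then have "\<exists>\<psi>. is_hom r V E \<psi> \<and> (\<forall>u. tsite r u \<and> length u = Suc N \<longrightarrow> \<psi> u = \<phi> u) \<and> \<psi> [] = i"
    by (rule exI[where x = ?\<psi>])
  moreover have "Suc N \<ge> 1" by simp
  ultimately show False using no by blast
qed


definition stiff :: "'a set \<Rightarrow> ('a \<Rightarrow> 'a \<Rightarrow> bool) \<Rightarrow> bool" where
  "stiff V E \<longleftrightarrow> (\<forall>i\<in>V. \<forall>j\<in>V. i \<noteq> j \<longrightarrow> \<not> nbhd V E i \<subseteq> nbhd V E j)"

lemma stiff_retract:
  assumes "finite V" and sym: "\<forall>x y. E x y \<longrightarrow> E y x" and "\<not> dismantlable E V"
  shows "\<exists>V' \<rho>. V' \<subseteq> V \<and> (\<forall>x\<in>V. \<rho> x \<in> V') \<and> (\<forall>x\<in>V'. \<rho> x = x)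
     \<and> (\<forall>x\<in>V. \<forall>y\<in>V. E x y \<longrightarrow> E (\<rho> x) (\<rho> y)) \<and> stiff V' E \<and> \<not> dismantlable E V'"
  using assms(1,3)
proof (induction "card V" arbitrary: V rule: less_induct)
  case less
  show ?case
  proof (cases "stiff V E")
    case True
    then show ?thesis using less.prems by (intro exI[of _ V] exI[of _ id]) auto
  next
    case False
    then obtain a b where ab: "a \<in> V" "b \<in> V" "a \<noteq> b" "nbhd V E a \<subseteq> nbhd V E b"
      unfolding stiff_def by blast
    have nd: "\<not> dismantlable E (V - {a})" using less.prems ab dism_fold by metis
    have "card (V - {a}) < card V" using less.prems ab by (meson card_Diff1_less)
    then obtain V' \<rho> where R: "V' \<subseteq> V - {a}" "\<forall>x\<in>V - {a}. \<rho> x \<in> V'" "\<forall>x\<in>V'. \<rho> x = x"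
      "\<forall>x\<in>V - {a}. \<forall>y\<in>V - {a}. E x y \<longrightarrow> E (\<rho> x) (\<rho> y)" "stiff V' E" "\<not> dismantlable E V'"
      using less.hyps[of "V - {a}"] less.prems nd by auto
    let ?f = "foldm a b"
    have fin: "x \<in> V \<Longrightarrow> ?f x \<in> V - {a}" for x using ab by (auto simp: foldm_def)
    have fh: "x \<in> V \<Longrightarrow> y \<in> V \<Longrightarrow> E x y \<Longrightarrow> E (?f x) (?f y)" for x y
      using foldm_hom[OF sym ab(1,2,4)] by blast
    have fid: "x \<in> V' \<Longrightarrow> ?f x = x" for x using R(1) by (auto simp: foldm_def)
    show ?thesis
      apply (intro exI[of _ V'] exI[of _ "\<lambda>x. \<rho> (?f x)"])
      using R fin fh fid by auto
  qed
qed

fun treemap :: "('a \<Rightarrow> nat \<Rightarrow> 'a) \<Rightarrow> 'a \<Rightarrow> nat list \<Rightarrow> 'a" where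
  "treemap en x0 [] = x0"
| "treemap en x0 (a # rs) = en (treemap en x0 rs) a"

lemma enum_exists:
  assumes "finite S" "S \<noteq> {}" "card S \<le> r"
  shows "\<exists>h. (\<forall>a. h a \<in> S) \<and> (\<forall>z\<in>S. \<exists>a<r. h a = z)"
proof -
  obtain g where g: "bij_betw g {0..<card S} S" using ex_bij_betw_nat_finite[OF assms(1)] by blast
  have c: "card S > 0" using assms card_gt_0_iff by blast
  let ?h = "\<lambda>a. if a < card S then g a else g 0"
  have "\<forall>a. ?h a \<in> S" using g c unfolding bij_betw_def by auto
  moreover have "\<forall>z\<in>S. \<exists>a<r. ?h a = z"
  proof
    fix z assume "z \<in> S"
    then obtain a where "a < card S" "g a = z" using g unfolding bij_betw_def by (metis atLeastLessThan_iff imageE)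
    then show "\<exists>a<r. ?h a = z" using assms(3) by (intro exI[of _ a]) auto
  qed
  ultimately show ?thesis by (intro exI[where x = ?h]) blast
qed


lemma nondism_lra:
  assumes "graph V E" "finite V" "V \<noteq> {}" "\<not> dismantlable E V"
  shows "long_range_action (card V) V E"
proof -
  have sym: "\<forall>x y. E x y \<longrightarrow> E y x" using assms(1) unfolding graph_def by blast
  obtain V' \<rho> where R: "V' \<subseteq> V" "\<forall>x\<in>V. \<rho> x \<in> V'" "\<forall>x\<in>V'. \<rho> x = x"
      "\<forall>x\<in>V. \<forall>y\<in>V. E x y \<longrightarrow> E (\<rho> x) (\<rho> y)" "stiff V' E" "\<not> dismantlable E V'"
    using stiff_retract[OF assms(2) sym assms(4)] by blast
  define r where "r = card V"
  obtain x0 where x0: "x0 \<in> V'" using R(1,2) assms(3) by blast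
  obtain i where i: "i \<in> V'" "i \<noteq> x0"
  proof -
    have "V' \<noteq> {x0}" using R(6) dism_single by metis
    then show ?thesis using that x0 by blast
  qed
  have finV': "finite V'" using R(1) assms(2) finite_subset by blast
  have "\<forall>x\<in>V'. \<exists>h. (\<forall>a. h a \<in> nbhd V' E x) \<and> (\<forall>z\<in>nbhd V' E x. \<exists>a<r. h a = z)"
  proof
    fix x assume x: "x \<in> V'"
    obtain y where y: "y \<in> V'" "y \<noteq> x" using i x0 by (cases "x = x0") auto
    have ne: "nbhd V' E x \<noteq> {}" proof assume "nbhd V' E x = {}" then have "nbhd V' E x \<subseteq> nbhd V' E y" by simp then show False using R(5) x y unfolding stiff_def by metis qed
    have sub: "nbhd V' E x \<subseteq> V'" unfolding nbhd_def by auto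
    then have fin: "finite (nbhd V' E x)" using finV' finite_subset by blast
    have "card (nbhd V' E x) \<le> card V" using sub R(1) assms(2) by (meson card_mono order_trans)
    then show "\<exists>h. (\<forall>a. h a \<in> nbhd V' E x) \<and> (\<forall>z\<in>nbhd V' E x. \<exists>a<r. h a = z)"
      using enum_exists[OF fin ne] r_def by blast
  qed
  then obtain en where en: "\<forall>x\<in>V'. (\<forall>a. en x a \<in> nbhd V' E x) \<and> (\<forall>z\<in>nbhd V' E x. \<exists>a<r. en x a = z)"
    by (metis bchoice)
  define \<phi> where "\<phi> u = treemap en x0 (rev u)" for u
  have tin: "treemap en x0 rs \<in> V'" for rs
    by (induction rs) (use x0 en in \<open>auto simp: nbhd_def\<close>)
  then have \<phi>in: "\<phi> u \<in> V'" for u unfolding \<phi>_def by blast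
  have \<phi>snoc: "\<phi> (u @ [a]) = en (\<phi> u) a" for u a unfolding \<phi>_def by simp
  have \<phi>E: "E (\<phi> u) (\<phi> (u @ [a]))" for u a
    using en \<phi>in \<phi>snoc unfolding nbhd_def by auto
  have hom: "is_hom r V E \<phi>"
    unfolding is_hom_def
  proof (intro conjI allI impI)
    fix u show "\<phi> u \<in> V" using \<phi>in R(1) by blast
  next
    fix u v assume "tedge r u v"
    then have c: "(\<exists>a. v = u @ [a]) \<or> (\<exists>a. u = v @ [a])" unfolding tedge_def by auto
    then show "E (\<phi> u) (\<phi> v)" using \<phi>E sym by blast
  qed
  show ?thesis
    unfolding long_range_action_def r_def[symmetric]
  proof (intro exI conjI allI impI)
    show "is_hom r V E \<phi>" by (rule hom)
    show "i \<in> V" using i R(1) by blast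
    fix n :: nat assume "n \<ge> 1"
    show "\<not> (\<exists>\<psi>. is_hom r V E \<psi> \<and> (\<forall>u. tsite r u \<and> length u = n \<longrightarrow> \<psi> u = \<phi> u) \<and> \<psi> [] = i)"
    proof
      assume "\<exists>\<psi>. is_hom r V E \<psi> \<and> (\<forall>u. tsite r u \<and> length u = n \<longrightarrow> \<psi> u = \<phi> u) \<and> \<psi> [] = i"
      then obtain \<psi> where \<psi>: "is_hom r V E \<psi>" "\<forall>u. tsite r u \<and> length u = n \<longrightarrow> \<psi> u = \<phi> u" "\<psi> [] = i"
        by blast
      have claim: "\<forall>u. tsite r u \<and> length u + m = n \<longrightarrow> \<rho> (\<psi> u) = \<phi> u" for m
      proof (induction m)
        case 0
        then show ?case using \<psi>(2) R(3) \<phi>in by auto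
      next
        case (Suc m)
        show ?case
        proof (intro allI impI)
          fix u assume u: "tsite r u \<and> length u + Suc m = n"
          have \<psi>u: "\<psi> u \<in> V" using \<psi>(1) u unfolding is_hom_def by blast
          have "nbhd V' E (\<phi> u) \<subseteq> nbhd V' E (\<rho> (\<psi> u))"
          proof
            fix z assume z: "z \<in> nbhd V' E (\<phi> u)"
            then obtain a where a: "a < r" "en (\<phi> u) a = z" using en \<phi>in by blast
            have s: "tsite r (u @ [a])" using tsite_snoc u a by blast
            have "\<rho> (\<psi> (u @ [a])) = \<phi> (u @ [a])" using Suc.IH s u by auto
            then have "\<rho> (\<psi> (u @ [a])) = z" using a \<phi>snoc by simp
            moreover have "E (\<psi> u) (\<psi> (u @ [a]))" "\<psi> (u @ [a]) \<in> V"
              using hom_edge_snoc[OF \<psi>(1) s] by auto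
            ultimately have "E (\<rho> (\<psi> u)) z" using R(4) \<psi>u by metis
            then show "z \<in> nbhd V' E (\<rho> (\<psi> u))" using z unfolding nbhd_def by auto
          qed
          moreover have "\<rho> (\<psi> u) \<in> V'" using R(2) \<psi>u by blast
          ultimately show "\<rho> (\<psi> u) = \<phi> u" using R(5) \<phi>in unfolding stiff_def by metis
        qed
      qed
      have "\<rho> (\<psi> []) = \<phi> []" using claim[of n] tsite_Nil by auto
      then have "i = x0" using \<psi>(3) R(3) i unfolding \<phi>_def by simp
      then show False using i by simp
    qed
  qed
qed

theorem mainTheorem10:
  fixes V :: "'a set" and E :: "'a \<Rightarrow> 'a \<Rightarrow> bool"
  assumes "graph V E" and "finite V" and "connected_graph V E"
    and "\<exists>i j. E i j"
  shows "(\<forall>r::nat. r \<ge> 1 \<longrightarrow> \<not> long_range_action r V E) \<longleftrightarrow> dismantlable E V"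
proof
  assume no: "\<forall>r::nat. r \<ge> 1 \<longrightarrow> \<not> long_range_action r V E"
  show "dismantlable E V"
  proof (rule ccontr)
    assume nd: "\<not> dismantlable E V"
    have ne: "V \<noteq> {}" using assms(3) unfolding connected_graph_def by blast
    then have "card V \<ge> 1" using assms(2) by (simp add: Suc_leI card_gt_0_iff)
    then show False using no nondism_lra[OF assms(1,2) ne nd] by blast
  qed
next
  assume "dismantlable E V"
  then show "\<forall>r::nat. r \<ge> 1 \<longrightarrow> \<not> long_range_action r V E"
    using dism_no_lra[OF assms(1,3)] by blast
qed

end
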